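(* Let $\mathcal C=\mathcal C(I,A,(\rho_i)_{i\in I},(C^a)_{a\in A})$ be a Cartan scheme and $\mathcal R=\mathcal R(\mathcal C,(R^a)_{a\in A})$ a root system of type $\mathcal C$. For $a\in A$ let $(R^a)^{\mathrm{re}}=\{\omega(\alpha_i)\mid \omega\in\mathrm{Hom}(b,a),\ b\in A,\ i\in I\}$. Then $\mathcal R^{\mathrm{re}}=\mathcal R(\mathcal C,((R^a)^{\mathrm{re}})_{a\in A})$ is a root system of type $\mathcal C$, and $\mathcal W(\mathcal R^{\mathrm{re}})=\mathcal W(\mathcal R)$.
   Context: Let $I$ be a nonempty finite set and $\{\alpha_i\mid i\in I\}$ the standard basis of $\mathbb Z^I$; $\mathbb N_0=\{0,1,2,\dots\}$. A generalized Cartan matrix is $C=(c_{ij})_{i,j\in I}\in\mathbb Z^{I\times I}$ with $c_{ii}=2$, $c_{jk}\le0$ for $j\ne k$, and $c_{ij}=0\Rightarrow c_{ji}=0$. A Cartan scheme $\mathcal C=\mathcal C(I,A,(\rho_i)_{i\in I},(C^a)_{a\in A})$ consists of a nonempty set $A$, maps $\rho_i:A\to A$ and generalized Cartan matrices $C^a=(c^a_{jk})_{j,k\in I}$ such that (C1) $\rho_i^2=\mathrm{id}$ and (C2) $c^a_{ij}=c^{\rho_i(a)}_{ij}$ for all $a\in A$, $i,j\in I$. For $i\in I$, $a\in A$ let $\sigma_i^a\in\mathrm{Aut}(\mathbb Z^I)$, $\sigma_i^a(\alpha_j)=\alpha_j-c^a_{ij}\alpha_i$. The Weyl groupoid $\mathcal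 W(\mathcal C)$ has object set $A$; $\mathrm{Hom}(a,b)$ consists of the triples $(b,f,a)$ with $f=\sigma_{i_n}^{a_{n-1}}\cdots\sigma_{i_1}^{a_0}$, where $n\ge0$, $i_1,\dots,i_n\in I$, $a_0=a$, $a_k=\rho_{i_k}(a_{k-1})$, $a_n=b$ (one writes $\omega(v)=f(v)$ for $\omega=(b,f,a)$); composition is multiplication in $\mathrm{Aut}(\mathbb Z^I)$. A root system of type $\mathcal C$ is a family $\mathcal R=\mathcal R(\mathcal C,(R^a)_{a\in A})$ of subsets $R^a\subset\mathbb Z^I$ such that, writing $R^a_+=R^a\cap\mathbb N_0^I$ and $m^a_{i,j}=|R^a\cap(\mathbb N_0\alpha_i+\mathbb N_0\alpha_j)|$, for all $a\in A$, $i,j\in I$: (R1) $R^a=R^a_+\cup(-R^a_+)$; (R2) $R^a\cap\mathbb Z\alpha_i=\{\alpha_i,-\alpha_i\}$; (R3) $\sigma_i^a(R^a)=R^{\rho_i(a)}$; (R4) if $i\neq j$ and $m^a_{i,j}$ is finite then $(\rho_i\rho_j)^{m^a_{i,j}}(a)=a$. The Weyl groupoid $\mathcal W(\mathcal R)$ of a root system of type $\mathcal C$ is defined to be $\mathcal W(\mathcal C)$. *)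

theory Defs
  imports Main
begin

text \<open>Elements of Z^I are represented as functions 'i => int vanishing outside I.\<close>

definition zvec :: "'i set \<Rightarrow> ('i \<Rightarrow> int) set" where
  "zvec I = {v. \<forall>k. k \<notin> I \<longrightarrow> v k = 0}"

definition alpha :: "'i \<Rightarrow> 'i \<Rightarrow> int" where
  "alpha i = (\<lambda>k. if k = i then 1 else 0)"

definition gen_cartan_matrix :: "'i set \<Rightarrow> ('i \<Rightarrow> 'i \<Rightarrow> int) \<Rightarrow> bool" where
  "gen_cartan_matrix I c \<longleftrightarrow>
     (\<forall>i\<in>I. c i i = 2) \<and>
     (\<forall>j\<in>I. \<forall>k\<in>I. j \<noteq> k \<longrightarrow> c j k \<le> 0) \<and>
     (\<forall>i\<in>I. \<forall>j\<in>I. c i j = 0 \<longrightarrow> c j i = 0)"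

definition cartan_scheme ::
  "'i set \<Rightarrow> 'a set \<Rightarrow> ('i \<Rightarrow> 'a \<Rightarrow> 'a) \<Rightarrow> ('a \<Rightarrow> 'i \<Rightarrow> 'i \<Rightarrow> int) \<Rightarrow> bool" where
  "cartan_scheme I A rho C \<longleftrightarrow>
     finite I \<and> I \<noteq> {} \<and> A \<noteq> {} \<and>
     (\<forall>i\<in>I. \<forall>a\<in>A. rho i a \<in> A \<and> rho i (rho i a) = a) \<and>
     (\<forall>a\<in>A. gen_cartan_matrix I (C a)) \<and>
     (\<forall>a\<in>A. \<forall>i\<in>I. \<forall>j\<in>I. C a i j = C (rho i a) i j)"

text \<open>sigma_i^a(v) = v - (sum_j c^a_ij v_j) alpha_i, the linear map with
  sigma_i^a(alpha_j) = alpha_j - c^a_ij alpha_i.\<close>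
definition sigma ::
  "'i set \<Rightarrow> ('a \<Rightarrow> 'i \<Rightarrow> 'i \<Rightarrow> int) \<Rightarrow> 'i \<Rightarrow> 'a \<Rightarrow> ('i \<Rightarrow> int) \<Rightarrow> ('i \<Rightarrow> int)" where
  "sigma I C i a v = (\<lambda>k. if k = i then v k - (\<Sum>j\<in>I. C a i j * v j) else v k)"

fun wtgt :: "('i \<Rightarrow> 'a \<Rightarrow> 'a) \<Rightarrow> 'a \<Rightarrow> 'i list \<Rightarrow> 'a" where
  "wtgt rho a [] = a"
| "wtgt rho a (i # is) = wtgt rho (rho i a) is"

text \<open>The map sigma_{i_n}^{a_{n-1}} ... sigma_{i_1}^{a_0}.\<close>
fun wmap :: "'i set \<Rightarrow> ('i \<Rightarrow> 'a \<Rightarrow> 'a) \<Rightarrow> ('a \<Rightarrow> 'i \<Rightarrow> 'i \<Rightarrow> int) \<Rightarrow> 'a \<Rightarrow> 'i list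
              \<Rightarrow> ('i \<Rightarrow> int) \<Rightarrow> ('i \<Rightarrow> int)" where
  "wmap I rho C a [] = id"
| "wmap I rho C a (i # is) = wmap I rho C (rho i a) is \<circ> sigma I C i a"

text \<open>Hom(a,b) in the Weyl groupoid: triples (b, f, a).\<close>
definition wg_hom ::
  "'i set \<Rightarrow> ('i \<Rightarrow> 'a \<Rightarrow> 'a) \<Rightarrow> ('a \<Rightarrow> 'i \<Rightarrow> 'i \<Rightarrow> int) \<Rightarrow> 'a \<Rightarrow> 'a
    \<Rightarrow> ('a \<times> (('i \<Rightarrow> int) \<Rightarrow> ('i \<Rightarrow> int)) \<times> 'a) set" where
  "wg_hom I rho C a b = {(b, wmap I rho C a is, a) | is. set is \<subseteq> I \<and> wtgt rho a is = b}"

definition weyl_groupoid ::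
  "'i set \<Rightarrow> 'a set \<Rightarrow> ('i \<Rightarrow> 'a \<Rightarrow> 'a) \<Rightarrow> ('a \<Rightarrow> 'i \<Rightarrow> 'i \<Rightarrow> int)
    \<Rightarrow> 'a set \<times> ('a \<Rightarrow> 'a \<Rightarrow> ('a \<times> (('i \<Rightarrow> int) \<Rightarrow> ('i \<Rightarrow> int)) \<times> 'a) set)" where
  "weyl_groupoid I A rho C = (A, \<lambda>a b. if a \<in> A \<and> b \<in> A then wg_hom I rho C a b else {})"

text \<open>The Weyl groupoid of a root system of type C is by definition W(C).\<close>
definition weyl_groupoid_rs ::
  "'i set \<Rightarrow> 'a set \<Rightarrow> ('i \<Rightarrow> 'a \<Rightarrow> 'a) \<Rightarrow> ('a \<Rightarrow> 'i \<Rightarrow> 'i \<Rightarrow> int) \<Rightarrow> ('a \<Rightarrow> ('i \<Rightarrow> int) set)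
    \<Rightarrow> 'a set \<times> ('a \<Rightarrow> 'a \<Rightarrow> ('a \<times> (('i \<Rightarrow> int) \<Rightarrow> ('i \<Rightarrow> int)) \<times> 'a) set)" where
  "weyl_groupoid_rs I A rho C R = weyl_groupoid I A rho C"

definition pos_roots :: "('i \<Rightarrow> int) set \<Rightarrow> ('i \<Rightarrow> int) set" where
  "pos_roots S = {v \<in> S. \<forall>k. 0 \<le> v k}"

definition m_ij :: "('i \<Rightarrow> int) set \<Rightarrow> 'i \<Rightarrow> 'i \<Rightarrow> ('i \<Rightarrow> int) set" where
  "m_ij S i j = {v \<in> S. \<exists>m n::nat. v = (\<lambda>k. int m * alpha i k + int n * alpha j k)}"

definition root_system ::
  "'i set \<Rightarrow> 'a set \<Rightarrow> ('i \<Rightarrow> 'a \<Rightarrow> 'a) \<Rightarrow> ('a \<Rightarrow> 'i \<Rightarrow> 'i \<Rightarrow> int) \<Rightarrow> ('a \<Rightarrow> ('i \<Rightarrow> int) set) \<Rightarrow> bool" where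
  "root_system I A rho C R \<longleftrightarrow>
     cartan_scheme I A rho C \<and>
     (\<forall>a\<in>A. R a \<subseteq> zvec I) \<and>
     (\<forall>a\<in>A. R a = pos_roots (R a) \<union> uminus ` pos_roots (R a)) \<and>
     (\<forall>a\<in>A. \<forall>i\<in>I. R a \<inter> {(\<lambda>k. c * alpha i k) | c::int. True} = {alpha i, - alpha i}) \<and>
     (\<forall>a\<in>A. \<forall>i\<in>I. sigma I C i a ` R a = R (rho i a)) \<and>
     (\<forall>a\<in>A. \<forall>i\<in>I. \<forall>j\<in>I. i \<noteq> j \<longrightarrow> finite (m_ij (R a) i j) \<longrightarrow>
         ((rho i \<circ> rho j) ^^ card (m_ij (R a) i j)) a = a)"

definition real_roots ::
  "'i set \<Rightarrow> 'a set \<Rightarrow> ('i \<Rightarrow> 'a \<Rightarrow> 'a) \<Rightarrow> ('a \<Rightarrow> 'i \<Rightarrow> 'i \<Rightarrow> int) \<Rightarrow> 'a \<Rightarrow> ('i \<Rightarrow> int) set" where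
  "real_roots I A rho C a =
     {(fst (snd \<omega>)) (alpha i) | \<omega> b i. b \<in> A \<and> \<omega> \<in> wg_hom I rho C b a \<and> i \<in> I}"

end

theory Submission
  imports Defs
begin

lemma wtgt_append: "wtgt rho a (xs @ ys) = wtgt rho (wtgt rho a xs) ys"
  by (induction xs arbitrary: a) auto

lemma wmap_append: "wmap I rho C a (xs @ ys) = wmap I rho C (wtgt rho a xs) ys \<circ> wmap I rho C a xs"
  by (induction xs arbitrary: a) auto

lemma sigma_uminus: "sigma I C i a (- v) = - sigma I C i a v"
  by (auto simp: sigma_def sum_negf fun_eq_iff)

lemma sigma_lin: "sigma I C i a (\<lambda>k. p * x k + q * y k) = (\<lambda>k. p * sigma I C i a x k + q * sigma I C i a y k)"
  by (auto simp: sigma_def fun_eq_iff algebra_simps sum.distrib sum_distrib_left)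

lemma wmap_uminus: "wmap I rho C a xs (- v) = - wmap I rho C a xs v"
  by (induction xs arbitrary: a v) (auto simp: sigma_uminus)

lemma wmap_lin: "wmap I rho C a xs (\<lambda>k. p * x k + q * y k) = (\<lambda>k. p * wmap I rho C a xs x k + q * wmap I rho C a xs y k)"
  by (induction xs arbitrary: a x y) (auto simp: sigma_lin)

lemma sigma_off: "k \<noteq> i \<Longrightarrow> sigma I C i a v k = v k"
  by (simp add: sigma_def)

lemma wmap_spn: "set xs \<subseteq> {i, j} \<Longrightarrow> \<forall>k. k \<noteq> i \<and> k \<noteq> j \<longrightarrow> v k = 0 \<Longrightarrow>
   \<forall>k. k \<noteq> i \<and> k \<noteq> j \<longrightarrow> wmap I rho C c xs v k = 0"
proof (induction xs arbitrary: c v)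
  case Nil then show ?case by simp
next
  case (Cons x xs)
  have "\<forall>k. k \<noteq> i \<and> k \<noteq> j \<longrightarrow> sigma I C x c v k = 0"
    using Cons.prems by (auto simp: sigma_def)
  then show ?case using Cons by simp
qed


definition ltr :: "'i \<Rightarrow> 'i \<Rightarrow> nat \<Rightarrow> 'i" where "ltr i j t = (if even t then i else j)"
definition word :: "'i \<Rightarrow> 'i \<Rightarrow> nat \<Rightarrow> 'i list" where "word i j s = map (ltr i j) [0..<s]"

lemma word_Suc: "word i j (Suc s) = word i j s @ [ltr i j s]"
  by (simp add: word_def)

lemma word_set: "set (word i j s) \<subseteq> {i, j}"
  by (auto simp: word_def ltr_def)

lemma mij_char: "i \<noteq> j \<Longrightarrow> m_ij S i j = {v \<in> S. (\<forall>k. k \<noteq> i \<and> k \<noteq> j \<longrightarrow> v k = 0) \<and> (\<forall>k. 0 \<le> v k)}"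
proof (intro equalityI subsetI)
  fix v assume ij: "i \<noteq> j" and "v \<in> m_ij S i j"
  then obtain m n :: nat where "v \<in> S" "v = (\<lambda>k. int m * alpha i k + int n * alpha j k)"
    by (auto simp: m_ij_def)
  then show "v \<in> {v \<in> S. (\<forall>k. k \<noteq> i \<and> k \<noteq> j \<longrightarrow> v k = 0) \<and> (\<forall>k. 0 \<le> v k)}"
    by (auto simp: alpha_def)
next
  fix v assume ij: "i \<noteq> j" and v: "v \<in> {v \<in> S. (\<forall>k. k \<noteq> i \<and> k \<noteq> j \<longrightarrow> v k = 0) \<and> (\<forall>k. 0 \<le> v k)}"
  have "v = (\<lambda>k. int (nat (v i)) * alpha i k + int (nat (v j)) * alpha j k)"
    using v ij by (auto simp: alpha_def fun_eq_iff)
  then show "v \<in> m_ij S i j" using v unfolding m_ij_def by blast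
qed

context
  fixes I :: "'i set" and A :: "'a set" and rho :: "'i \<Rightarrow> 'a \<Rightarrow> 'a"
    and C :: "'a \<Rightarrow> 'i \<Rightarrow> 'i \<Rightarrow> int" and R :: "'a \<Rightarrow> ('i \<Rightarrow> int) set"
  assumes rs: "root_system I A rho C R"
begin

lemma cs: "cartan_scheme I A rho C" using rs unfolding root_system_def by (elim conjE)
lemma finI: "finite I" using cs unfolding cartan_scheme_def by (elim conjE)
lemma rhoA: "i \<in> I \<Longrightarrow> a \<in> A \<Longrightarrow> rho i a \<in> A"
proof -
  assume h: "i \<in> I" "a \<in> A"
  have "\<forall>i\<in>I. \<forall>a\<in>A. rho i a \<in> A \<and> rho i (rho i a) = a" using cs unfolding cartan_scheme_def by (elim conjE)
  then show ?thesis using h by blast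
qed
lemma rho_inv: "i \<in> I \<Longrightarrow> a \<in> A \<Longrightarrow> rho i (rho i a) = a"
proof -
  assume h: "i \<in> I" "a \<in> A"
  have "\<forall>i\<in>I. \<forall>a\<in>A. rho i a \<in> A \<and> rho i (rho i a) = a" using cs unfolding cartan_scheme_def by (elim conjE)
  then show ?thesis using h by blast
qed
lemma Cii: "i \<in> I \<Longrightarrow> a \<in> A \<Longrightarrow> C a i i = 2"
proof -
  assume h: "i \<in> I" "a \<in> A"
  have "\<forall>a\<in>A. gen_cartan_matrix I (C a)" using cs unfolding cartan_scheme_def by (elim conjE)
  then have "gen_cartan_matrix I (C a)" using h by blast
  then show ?thesis using h unfolding gen_cartan_matrix_def by blast
qed
lemma C2: "i \<in> I \<Longrightarrow> j \<in> I \<Longrightarrow> a \<in> A \<Longrightarrow> C (rho i a) i j = C a i j"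
proof -
  assume h: "i \<in> I" "j \<in> I" "a \<in> A"
  have "\<forall>a\<in>A. \<forall>i\<in>I. \<forall>j\<in>I. C a i j = C (rho i a) i j" using cs unfolding cartan_scheme_def by (elim conjE)
  from this[rule_format, OF h(3,1,2)] show ?thesis by simp
qed
lemma Rz: "a \<in> A \<Longrightarrow> R a \<subseteq> zvec I"
proof -
  assume h: "a \<in> A"
  have "\<forall>a\<in>A. R a \<subseteq> zvec I" using rs unfolding root_system_def by (elim conjE)
  from this[rule_format, OF h] show ?thesis .
qed
lemma R1: "a \<in> A \<Longrightarrow> R a = pos_roots (R a) \<union> uminus ` pos_roots (R a)"
proof -
  assume h: "a \<in> A"
  have "\<forall>a\<in>A. R a = pos_roots (R a) \<union> uminus ` pos_roots (R a)" using rs unfolding root_system_def by (elim conjE)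
  from this[rule_format, OF h] show ?thesis .
qed
lemma R2: "a \<in> A \<Longrightarrow> i \<in> I \<Longrightarrow> R a \<inter> {(\<lambda>k. c * alpha i k) | c::int. True} = {alpha i, - alpha i}"
proof -
  assume h: "a \<in> A" "i \<in> I"
  have "\<forall>a\<in>A. \<forall>i\<in>I. R a \<inter> {(\<lambda>k. c * alpha i k) | c::int. True} = {alpha i, - alpha i}" using rs unfolding root_system_def by (elim conjE)
  from this[rule_format, OF h] show ?thesis .
qed
lemma R3: "a \<in> A \<Longrightarrow> i \<in> I \<Longrightarrow> sigma I C i a ` R a = R (rho i a)"
proof -
  assume h: "a \<in> A" "i \<in> I"
  have "\<forall>a\<in>A. \<forall>i\<in>I. sigma I C i a ` R a = R (rho i a)" using rs unfolding root_system_def by (elim conjE)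
  from this[rule_format, OF h] show ?thesis .
qed
lemma R4: "a \<in> A \<Longrightarrow> i \<in> I \<Longrightarrow> j \<in> I \<Longrightarrow> i \<noteq> j \<Longrightarrow> finite (m_ij (R a) i j) \<Longrightarrow>
         ((rho i \<circ> rho j) ^^ card (m_ij (R a) i j)) a = a"
proof -
  assume h: "a \<in> A" "i \<in> I" "j \<in> I" "i \<noteq> j" "finite (m_ij (R a) i j)"
  have "\<forall>a\<in>A. \<forall>i\<in>I. \<forall>j\<in>I. i \<noteq> j \<longrightarrow> finite (m_ij (R a) i j) \<longrightarrow>
         ((rho i \<circ> rho j) ^^ card (m_ij (R a) i j)) a = a"
    using rs unfolding root_system_def by (elim conjE)
  from this[rule_format, OF h] show ?thesis .
qed

lemma R_pn: "a \<in> A \<Longrightarrow> v \<in> R a \<Longrightarrow> (\<forall>k. 0 \<le> v k) \<or> (\<forall>k. v k \<le> 0)"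
proof -
  assume a: "a \<in> A" and v: "v \<in> R a"
  then have "v \<in> pos_roots (R a) \<or> v \<in> uminus ` pos_roots (R a)" using R1[OF a] by blast
  then show ?thesis
  proof
    assume "v \<in> pos_roots (R a)" then show ?thesis by (simp add: pos_roots_def)
  next
    assume "v \<in> uminus ` pos_roots (R a)"
    then obtain w where "v = - w" "\<forall>k. 0 \<le> w k" by (auto simp: pos_roots_def)
    then show ?thesis by simp
  qed
qed

lemma R_alpha: "a \<in> A \<Longrightarrow> i \<in> I \<Longrightarrow> alpha i \<in> R a \<and> - alpha i \<in> R a"
proof -
  assume "a \<in> A" "i \<in> I"
  from R2[OF this] show ?thesis by blast
qed

lemma R_line: "a \<in> A \<Longrightarrow> i \<in> I \<Longrightarrow> v \<in> R a \<Longrightarrow> v = (\<lambda>k. c * alpha i k) \<Longrightarrow> v = alpha i \<or> v = - alpha i"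
proof -
  assume "a \<in> A" "i \<in> I" "v \<in> R a" "v = (\<lambda>k. c * alpha i k)"
  with R2[OF \<open>a \<in> A\<close> \<open>i \<in> I\<close>] show ?thesis by blast
qed

lemma R_nz: "a \<in> A \<Longrightarrow> (\<lambda>k. 0) \<notin> R a"
proof
  assume a: "a \<in> A" and z: "(\<lambda>k. 0::int) \<in> R a"
  obtain i where i: "i \<in> I" using cs by (auto simp: cartan_scheme_def)
  have "(\<lambda>k::'i. 0::int) = alpha i \<or> (\<lambda>k. 0) = - alpha i"
    using R_line[OF a i z, of 0] by simp
  then have "(0::int) = alpha i i \<or> (0::int) = - alpha i i" by (metis uminus_apply)
  then show False by (simp add: alpha_def)
qed

lemma sigma_inv: "i \<in> I \<Longrightarrow> a \<in> A \<Longrightarrow> sigma I C i (rho i a) (sigma I C i a v) = v"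
proof -
  assume i: "i \<in> I" and a: "a \<in> A"
  define S where "S = (\<Sum>j\<in>I. C a i j * v j)"
  have sv: "sigma I C i a v = (\<lambda>k. v k - (if k = i then S else 0))"
    by (auto simp: sigma_def S_def fun_eq_iff)
  have "(\<Sum>j\<in>I. C (rho i a) i j * sigma I C i a v j) = (\<Sum>j\<in>I. C a i j * v j - (if j = i then C a i j * S else 0))"
    by (rule sum.cong) (auto simp: C2 i a sv algebra_simps)
  also have "\<dots> = S - C a i i * S"
    using finI i by (simp add: sum_subtractf S_def)
  also have "\<dots> = - S" using Cii[OF i a] by simp
  finally have "(\<Sum>j\<in>I. C (rho i a) i j * sigma I C i a v j) = - S" .
  then show ?thesis by (auto simp: sigma_def[of I C i "rho i a"] sv fun_eq_iff)
qed

lemma sigma_alpha: "i \<in> I \<Longrightarrow> a \<in> A \<Longrightarrow> sigma I C i a (alpha i) = - alpha i"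
proof -
  assume i: "i \<in> I" and a: "a \<in> A"
  have "(\<Sum>j\<in>I. C a i j * alpha i j) = (\<Sum>j\<in>I. if j = i then C a i j else 0)"
    by (rule sum.cong) (auto simp: alpha_def)
  also have "\<dots> = 2" using finI i Cii[OF i a] by simp
  finally show ?thesis by (auto simp: sigma_def fun_eq_iff alpha_def)
qed

lemma wtgtA: "a \<in> A \<Longrightarrow> set xs \<subseteq> I \<Longrightarrow> wtgt rho a xs \<in> A"
  by (induction xs arbitrary: a) (auto simp: rhoA)

lemma wtgt_rev: "a \<in> A \<Longrightarrow> set xs \<subseteq> I \<Longrightarrow> wtgt rho (wtgt rho a xs) (rev xs) = a"
  by (induction xs arbitrary: a) (auto simp: wtgt_append rhoA rho_inv)

lemma wmap_rev: "a \<in> A \<Longrightarrow> set xs \<subseteq> I \<Longrightarrow> wmap I rho C (wtgt rho a xs) (rev xs) (wmap I rho C a xs v) = v"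
proof (induction xs arbitrary: a v)
  case Nil then show ?case by simp
next
  case (Cons x xs)
  have x: "x \<in> I" and ra: "rho x a \<in> A" using Cons.prems rhoA by auto
  have t: "wtgt rho (wtgt rho (rho x a) xs) (rev xs) = rho x a"
    using wtgt_rev[OF ra] Cons.prems by auto
  show ?case using Cons.IH[OF ra] Cons.prems
    by (simp add: wmap_append t sigma_inv[OF x Cons.prems(1)])
qed

lemma wmap_R: "a \<in> A \<Longrightarrow> set xs \<subseteq> I \<Longrightarrow> v \<in> R a \<Longrightarrow> wmap I rho C a xs v \<in> R (wtgt rho a xs)"
proof (induction xs arbitrary: a v)
  case Nil then show ?case by simp
next
  case (Cons x xs)
  have x: "x \<in> I" and ra: "rho x a \<in> A" using Cons.prems rhoA by auto
  have "sigma I C x a v \<in> R (rho x a)" using R3[OF Cons.prems(1) x] Cons.prems by blast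
  then show ?case using Cons.IH[OF ra] Cons.prems by simp
qed


lemma re_iff: "v \<in> real_roots I A rho C a \<longleftrightarrow>
   (\<exists>b xs l. b \<in> A \<and> set xs \<subseteq> I \<and> wtgt rho b xs = a \<and> l \<in> I \<and> v = wmap I rho C b xs (alpha l))"
proof
  assume "v \<in> real_roots I A rho C a"
  then show "\<exists>b xs l. b \<in> A \<and> set xs \<subseteq> I \<and> wtgt rho b xs = a \<and> l \<in> I \<and> v = wmap I rho C b xs (alpha l)"
    unfolding real_roots_def wg_hom_def by auto
next
  assume "\<exists>b xs l. b \<in> A \<and> set xs \<subseteq> I \<and> wtgt rho b xs = a \<and> l \<in> I \<and> v = wmap I rho C b xs (alpha l)"
  then obtain b xs l where h: "b \<in> A" "set xs \<subseteq> I" "wtgt rho b xs = a" "l \<in> I" "v = wmap I rho C b xs (alpha l)"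
    by blast
  have "(a, wmap I rho C b xs, b) \<in> wg_hom I rho C b a" using h by (auto simp: wg_hom_def)
  then show "v \<in> real_roots I A rho C a" unfolding real_roots_def using h by force
qed

lemma re_I: "b \<in> A \<Longrightarrow> set xs \<subseteq> I \<Longrightarrow> wtgt rho b xs = a \<Longrightarrow> l \<in> I \<Longrightarrow>
   wmap I rho C b xs (alpha l) \<in> real_roots I A rho C a"
  using re_iff by blast

lemma re_R: "a \<in> A \<Longrightarrow> real_roots I A rho C a \<subseteq> R a"
proof
  fix v assume "v \<in> real_roots I A rho C a"
  then obtain b xs l where h: "b \<in> A" "set xs \<subseteq> I" "wtgt rho b xs = a" "l \<in> I" "v = wmap I rho C b xs (alpha l)"
    using re_iff by blast
  then show "v \<in> R a" using wmap_R[OF h(1,2)] R_alpha[OF h(1,4)] by auto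
qed

lemma re_neg: "v \<in> real_roots I A rho C a \<Longrightarrow> - v \<in> real_roots I A rho C a"
proof -
  assume "v \<in> real_roots I A rho C a"
  then obtain b xs l where h: "b \<in> A" "set xs \<subseteq> I" "wtgt rho b xs = a" "l \<in> I" "v = wmap I rho C b xs (alpha l)"
    using re_iff by blast
  have rb: "rho l b \<in> A" using rhoA h by auto
  have rr: "rho l (rho l b) = b" using rho_inv h by auto
  have "wmap I rho C (rho l b) (l # xs) (alpha l) = - v"
    using h sigma_alpha[OF h(4) rb] by (simp add: rr wmap_uminus)
  moreover have "wtgt rho (rho l b) (l # xs) = a" using h rr by simp
  ultimately show ?thesis using re_I[OF rb _ _ h(4), of "l # xs" a] h by auto
qed

lemma re_alpha: "a \<in> A \<Longrightarrow> i \<in> I \<Longrightarrow> alpha i \<in> real_roots I A rho C a"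
  using re_I[of a "[]" a i] by simp

lemma re_R3: "a \<in> A \<Longrightarrow> i \<in> I \<Longrightarrow> sigma I C i a ` real_roots I A rho C a = real_roots I A rho C (rho i a)"
proof (intro equalityI subsetI)
  fix w assume a: "a \<in> A" and i: "i \<in> I" and "w \<in> sigma I C i a ` real_roots I A rho C a"
  then obtain v where v: "v \<in> real_roots I A rho C a" and w: "w = sigma I C i a v" by blast
  then obtain b xs l where h: "b \<in> A" "set xs \<subseteq> I" "wtgt rho b xs = a" "l \<in> I" "v = wmap I rho C b xs (alpha l)"
    using re_iff by blast
  have "wmap I rho C b (xs @ [i]) (alpha l) = w" using h w by (simp add: wmap_append)
  moreover have "wtgt rho b (xs @ [i]) = rho i a" using h by (simp add: wtgt_append)
  moreover have "wmap I rho C b (xs @ [i]) (alpha l) \<in> real_roots I A rho C (rho i a)"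
    by (rule re_I) (use h i in \<open>auto simp: wtgt_append\<close>)
  ultimately show "w \<in> real_roots I A rho C (rho i a)" by simp
next
  fix w assume a: "a \<in> A" and i: "i \<in> I" and w: "w \<in> real_roots I A rho C (rho i a)"
  then obtain b xs l where h: "b \<in> A" "set xs \<subseteq> I" "wtgt rho b xs = rho i a" "l \<in> I" "w = wmap I rho C b xs (alpha l)"
    using re_iff by blast
  define u where "u = wmap I rho C b (xs @ [i]) (alpha l)"
  have u: "u = sigma I C i (rho i a) w" using h by (simp add: wmap_append u_def)
  have "wtgt rho b (xs @ [i]) = a" using h rho_inv[OF i a] by (simp add: wtgt_append)
  then have "u \<in> real_roots I A rho C a" using re_I[OF h(1) _ _ h(4), of "xs @ [i]"] h i u_def
    by auto
  moreover have "sigma I C i a u = w" using sigma_inv[OF i rhoA[OF i a]] rho_inv[OF i a] u by simp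
  ultimately show "w \<in> sigma I C i a ` real_roots I A rho C a" by blast
qed

lemma step_pos: "c \<in> A \<Longrightarrow> l \<in> I \<Longrightarrow> l \<noteq> oo \<Longrightarrow> v \<in> R c \<Longrightarrow> \<forall>k. k \<noteq> l \<and> k \<noteq> oo \<longrightarrow> v k = 0 \<Longrightarrow>
   \<forall>k. 0 \<le> v k \<Longrightarrow> v \<noteq> alpha l \<Longrightarrow> \<forall>k. 0 \<le> sigma I C l c v k"
proof -
  assume c: "c \<in> A" and l: "l \<in> I" and lo: "l \<noteq> oo" and v: "v \<in> R c" and sp: "\<forall>k. k \<noteq> l \<and> k \<noteq> oo \<longrightarrow> v k = 0"
    and P: "\<forall>k. 0 \<le> v k" and ne: "v \<noteq> alpha l"
  have sR: "sigma I C l c v \<in> R (rho l c)" using R3[OF c l] v by blast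
  have so: "sigma I C l c v oo = v oo" using lo sigma_off by metis
  show ?thesis
  proof (cases "v oo = 0")
    case True
    then have "v = (\<lambda>k. v l * alpha l k)" using sp by (auto simp: fun_eq_iff alpha_def)
    then have "v = alpha l \<or> v = - alpha l" using R_line[OF c l v] by blast
    then have "v = - alpha l" using ne by blast
    then have "v l = -1" by (simp add: alpha_def)
    moreover have "0 \<le> v l" using P by blast
    ultimately show ?thesis by simp
  next
    case False
    then have "v oo > 0" using P by (simp add: order_less_le)
    then have "\<not> (\<forall>k. sigma I C l c v k \<le> 0)" using so by (metis not_le)
    then show ?thesis using R_pn[OF rhoA[OF l c] sR] by blast
  qed
qed

lemma step_neg: "c \<in> A \<Longrightarrow> l \<in> I \<Longrightarrow> l \<noteq> oo \<Longrightarrow> v \<in> R c \<Longrightarrow> \<forall>k. k \<noteq> l \<and> k \<noteq> oo \<longrightarrow> v k = 0 \<Longrightarrow>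
   \<forall>k. v k \<le> 0 \<Longrightarrow> v \<noteq> - alpha l \<Longrightarrow> \<forall>k. sigma I C l c v k \<le> 0"
proof -
  assume c: "c \<in> A" and l: "l \<in> I" and lo: "l \<noteq> oo" and v: "v \<in> R c" and sp: "\<forall>k. k \<noteq> l \<and> k \<noteq> oo \<longrightarrow> v k = 0"
    and P: "\<forall>k. v k \<le> 0" and ne: "v \<noteq> - alpha l"
  have sR: "sigma I C l c v \<in> R (rho l c)" using R3[OF c l] v by blast
  have so: "sigma I C l c v oo = v oo" using lo sigma_off by metis
  show ?thesis
  proof (cases "v oo = 0")
    case True
    then have "v = (\<lambda>k. v l * alpha l k)" using sp by (auto simp: fun_eq_iff alpha_def)
    then have "v = alpha l \<or> v = - alpha l" using R_line[OF c l v] by blast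
    then have "v = alpha l" using ne by blast
    then have "v l = 1" by (simp add: alpha_def)
    moreover have "v l \<le> 0" using P by blast
    ultimately show ?thesis by simp
  next
    case False
    then have "v oo < 0" using P by (simp add: order_less_le)
    then have "\<not> (\<forall>k. 0 \<le> sigma I C l c v k)" using so by (metis not_le)
    then show ?thesis using R_pn[OF rhoA[OF l c] sR] by blast
  qed
qed

lemma re_mij:
  assumes a: "a \<in> A" and i: "i \<in> I" and j: "j \<in> I" and ij: "i \<noteq> j"
    and fin: "finite (m_ij (real_roots I A rho C a) i j)"
  shows "m_ij (real_roots I A rho C a) i j = m_ij (R a) i j"
proof -
  define L where "L = ltr i j"
  define ob where "ob s = wtgt rho a (word i j s)" for s
  define W where "W s = wmap I rho C a (word i j s)" for s
  define Wi where "Wi s = wmap I rho C (ob s) (rev (word i j s))" for s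
  define \<beta> where "\<beta> s = Wi s (alpha (L s))" for s
  define spn where "spn v \<longleftrightarrow> (\<forall>k. k \<noteq> i \<and> k \<noteq> j \<longrightarrow> v k = (0::int))" for v :: "'i \<Rightarrow> int"
  define P where "P v \<longleftrightarrow> (\<forall>k. 0 \<le> v k)" for v :: "'i \<Rightarrow> int"
  define N where "N v \<longleftrightarrow> (\<forall>k. v k \<le> (0::int))" for v :: "'i \<Rightarrow> int"
  have wI: "set (word i j s) \<subseteq> I" for s using word_set[of i j s] i j by blast
  have LI: "L s \<in> I" for s using i j by (simp add: L_def ltr_def)
  have Lij: "L s = i \<and> L (Suc s) = j \<or> L s = j \<and> L (Suc s) = i" for s by (auto simp: L_def ltr_def)
  have obA: "ob s \<in> A" for s using wtgtA[OF a wI] ob_def by simp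
  have WS: "W (Suc s) v = sigma I C (L s) (ob s) (W s v)" for s v
    by (simp add: W_def ob_def word_Suc wmap_append L_def)
  have W0: "W 0 v = v" for v by (simp add: W_def word_def)
  have WiW: "Wi s (W s v) = v" for s v using wmap_rev[OF a wI] by (simp add: Wi_def W_def ob_def)
  have WWi: "W s (Wi s v) = v" for s v
  proof -
    have t: "wtgt rho (ob s) (rev (word i j s)) = a" using wtgt_rev[OF a wI] ob_def by simp
    have "set (rev (word i j s)) \<subseteq> I" using wI by simp
    from wmap_rev[OF obA[of s] this, where v=v] show ?thesis by (simp add: t Wi_def W_def)
  qed
  have Winj: "W s x = W s y \<Longrightarrow> x = y" for s x y by (metis WiW)
  have WR: "v \<in> R a \<Longrightarrow> W s v \<in> R (ob s)" for s v using wmap_R[OF a wI] by (simp add: W_def ob_def)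
  have Wspn: "spn v \<Longrightarrow> spn (W s v)" for s v using wmap_spn[OF word_set] by (simp add: spn_def W_def)
  have Wneg: "W s (- v) = - W s v" for s v by (simp add: W_def wmap_uminus)
  have \<beta>re: "\<beta> s \<in> real_roots I A rho C a" for s
  proof -
    have "set (rev (word i j s)) \<subseteq> I" using wI by simp
    moreover have "wtgt rho (ob s) (rev (word i j s)) = a" using wtgt_rev[OF a wI] ob_def by simp
    ultimately show ?thesis unfolding \<beta>_def Wi_def using re_I[OF obA _ _ LI] by blast
  qed
  have \<beta>R: "\<beta> s \<in> R a" for s using \<beta>re re_R[OF a] by blast
  have \<beta>spn: "spn (\<beta> s)" for s
  proof -
    have "spn (alpha (L s))" using Lij[of s] ij by (auto simp: spn_def alpha_def)
    moreover have "set (rev (word i j s)) \<subseteq> {i, j}" using word_set by simp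
    ultimately show ?thesis using wmap_spn[of "rev (word i j s)" i j "alpha (L s)"]
      by (simp add: spn_def \<beta>_def Wi_def)
  qed
  have W\<beta>: "W s (\<beta> s) = alpha (L s)" for s by (simp add: \<beta>_def WWi)
  have Rpn: "c \<in> A \<Longrightarrow> v \<in> R c \<Longrightarrow> P v \<or> N v" for c v using R_pn by (simp add: P_def N_def)
  have nz: "v \<in> R a \<Longrightarrow> P v \<Longrightarrow> N v \<Longrightarrow> False" for v
  proof -
    assume "v \<in> R a" "P v" "N v"
    moreover have "v = (\<lambda>k. 0)" using \<open>P v\<close> \<open>N v\<close> by (auto simp: P_def N_def fun_eq_iff intro: order_antisym)
    ultimately show False using R_nz[OF a] by simp
  qed
  have spn2: "spn v \<Longrightarrow> \<forall>k. k \<noteq> L s \<and> k \<noteq> L (Suc s) \<longrightarrow> v k = 0" for v s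
    using Lij[of s] by (auto simp: spn_def)
  have LSne: "L s \<noteq> L (Suc s)" for s using Lij[of s] ij by auto
  have propP: "\<gamma> \<in> R a \<Longrightarrow> spn \<gamma> \<Longrightarrow> k \<le> s \<Longrightarrow> P (W k \<gamma>) \<Longrightarrow>
      (\<forall>t. k \<le> t \<and> t < s \<longrightarrow> W t \<gamma> \<noteq> alpha (L t)) \<Longrightarrow> P (W s \<gamma>)" for \<gamma> k s
  proof (induction s)
    case 0 then show ?case by simp
  next
    case (Suc s)
    show ?case
    proof (cases "k = Suc s")
      case True then show ?thesis using Suc by simp
    next
      case False
      then have ks: "k \<le> s" using Suc by simp
      then have Ps: "P (W s \<gamma>)" using Suc by auto
      have ne: "W s \<gamma> \<noteq> alpha (L s)" using Suc.prems(5) ks by blast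
      have "\<forall>k. 0 \<le> sigma I C (L s) (ob s) (W s \<gamma>) k"
        using step_pos[OF obA LI LSne WR[OF Suc.prems(1)] spn2[OF Wspn[OF Suc.prems(2)]] _ ne] Ps
        by (simp add: P_def)
      then show ?thesis by (simp add: WS P_def)
    qed
  qed
  have propN: "\<gamma> \<in> R a \<Longrightarrow> spn \<gamma> \<Longrightarrow> k \<le> s \<Longrightarrow> N (W k \<gamma>) \<Longrightarrow>
      (\<forall>t. k \<le> t \<and> t < s \<longrightarrow> W t \<gamma> \<noteq> - alpha (L t)) \<Longrightarrow> N (W s \<gamma>)" for \<gamma> k s
  proof (induction s)
    case 0 then show ?case by simp
  next
    case (Suc s)
    show ?case
    proof (cases "k = Suc s")
      case True then show ?thesis using Suc by simp
    next
      case False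
      then have ks: "k \<le> s" using Suc by simp
      then have Ps: "N (W s \<gamma>)" using Suc by auto
      have ne: "W s \<gamma> \<noteq> - alpha (L s)" using Suc.prems(5) ks by blast
      have "\<forall>k. sigma I C (L s) (ob s) (W s \<gamma>) k \<le> 0"
        using step_neg[OF obA LI LSne WR[OF Suc.prems(1)] spn2[OF Wspn[OF Suc.prems(2)]] _ ne] Ps
        by (simp add: N_def)
      then show ?thesis by (simp add: WS N_def)
    qed
  qed
  have mre: "m_ij (real_roots I A rho C a) i j = {v \<in> real_roots I A rho C a. spn v \<and> P v}"
    using mij_char[OF ij] by (simp add: spn_def P_def)
  have mR: "m_ij (R a) i j = {v \<in> R a. spn v \<and> P v}"
    using mij_char[OF ij] by (simp add: spn_def P_def)
  have ex: "\<exists>t. \<not> P (\<beta> t)"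
  proof (rule ccontr)
    assume "\<not> ?thesis"
    then have allP: "P (\<beta> t)" for t by blast
    have key: "k < l \<Longrightarrow> \<beta> k = \<beta> l \<Longrightarrow> False" for k l
    proof -
      assume kl: "k < l" and eq: "\<beta> k = \<beta> l"
      have "W (Suc k) (\<beta> l) = - alpha (L k)"
        using WS[of k "\<beta> l"] W\<beta>[of k] eq sigma_alpha[OF LI obA] by simp
      then have N1: "N (W (Suc k) (\<beta> l))" by (auto simp: N_def alpha_def)
      have "\<exists>t. Suc k \<le> t \<and> t < l \<and> W t (\<beta> l) = - alpha (L t)"
      proof (rule ccontr)
        assume "\<not> ?thesis"
        then have "N (W l (\<beta> l))" using propN[OF \<beta>R \<beta>spn _ N1] kl by auto
        then have "alpha (L l) (L l) \<le> 0" using W\<beta>[of l] by (simp add: N_def)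
        then show False by (simp add: alpha_def)
      qed
      then obtain t where "W t (\<beta> l) = - alpha (L t)" by blast
      then have "W t (\<beta> l) = W t (- \<beta> t)" using W\<beta>[of t] Wneg by simp
      then have "\<beta> l = - \<beta> t" by (rule Winj)
      then have "N (\<beta> l)" using allP[of t] by (simp add: N_def P_def)
      then show False using nz[OF \<beta>R allP] by blast
    qed
    have "inj \<beta>"
    proof (rule injI)
      fix x y assume eq: "\<beta> x = \<beta> y"
      show "x = y"
      proof (rule ccontr)
        assume "x \<noteq> y"
        then have "x < y \<or> y < x" by arith
        then show False using key eq by metis
      qed
    qed
    moreover have "range \<beta> \<subseteq> m_ij (real_roots I A rho C a) i j" using mre \<beta>re \<beta>spn allP by auto
    then have "finite (range \<beta>)" using fin finite_subset by blast
    ultimately have "finite (UNIV :: nat set)" using finite_imageD by blast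
    then show False by simp
  qed
  define n where "n = (LEAST t. \<not> P (\<beta> t))"
  have nP: "\<not> P (\<beta> n)" using ex LeastI_ex n_def by metis
  have ltP: "t < n \<Longrightarrow> P (\<beta> t)" for t using not_less_Least n_def by blast
  have Nn: "N (\<beta> n)" using Rpn[OF a \<beta>R] nP by blast
  have "\<beta> 0 = alpha i" by (simp add: \<beta>_def Wi_def word_def L_def ltr_def)
  then have "P (\<beta> 0)" by (simp add: P_def alpha_def)
  then have "n \<noteq> 0" using nP by metis
  then obtain n' where n: "n = Suc n'" using not0_implies_Suc by blast
  have sub: "m_ij (R a) i j \<subseteq> \<beta> ` {..<n}"
  proof
    fix \<gamma> assume "\<gamma> \<in> m_ij (R a) i j"
    then have \<gamma>R: "\<gamma> \<in> R a" and \<gamma>s: "spn \<gamma>" and \<gamma>P: "P \<gamma>" using mR by auto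
    show "\<gamma> \<in> \<beta> ` {..<n}"
    proof (rule ccontr)
      assume nin: "\<gamma> \<notin> \<beta> ` {..<n}"
      have ne: "\<forall>t. 0 \<le> t \<and> t < n \<longrightarrow> W t \<gamma> \<noteq> alpha (L t)"
      proof (intro allI impI)
        fix t assume t: "0 \<le> t \<and> t < n"
        show "W t \<gamma> \<noteq> alpha (L t)"
        proof
          assume "W t \<gamma> = alpha (L t)"
          then have "W t \<gamma> = W t (\<beta> t)" using W\<beta> by simp
          then have "\<gamma> = \<beta> t" by (rule Winj)
          with nin t show False by auto
        qed
      qed
      define u where "u = W n \<gamma>"
      have Pu: "P u" using propP[OF \<gamma>R \<gamma>s _ _ ne] W0 \<gamma>P u_def by simp
      have us: "spn u" using Wspn[OF \<gamma>s] u_def by simp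
      have ueq: "u = (\<lambda>k. u (L n) * alpha (L n) k + u (L n') * alpha (L n') k)"
        using us Lij[of n'] n ij by (auto simp: spn_def alpha_def fun_eq_iff)
      have Wn': "W n (- \<beta> n') = alpha (L n')"
        using WS[of n' "\<beta> n'"] W\<beta>[of n'] sigma_alpha[OF LI obA] n Wneg by (simp, simp add: fun_eq_iff)
      have Wia: "Wi n (alpha (L n')) = - \<beta> n'" using Wn' WiW by metis
      have "\<gamma> = Wi n u" by (simp add: u_def WiW)
      also have "\<dots> = Wi n (\<lambda>k. u (L n) * alpha (L n) k + u (L n') * alpha (L n') k)" using ueq by metis
      also have "\<dots> = (\<lambda>k. u (L n) * \<beta> n k + u (L n') * (- \<beta> n' k))"
        by (simp add: Wi_def wmap_lin) (simp add: Wi_def[symmetric] \<beta>_def[symmetric] Wia)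
      finally have geq: "\<gamma> = (\<lambda>k. u (L n) * \<beta> n k + u (L n') * (- \<beta> n' k))" .
      have "N \<gamma>"
        unfolding N_def
      proof
        fix k
        have "u (L n) * \<beta> n k \<le> 0" using Pu Nn by (simp add: P_def N_def mult_nonneg_nonpos)
        moreover have "u (L n') * (- \<beta> n' k) \<le> 0" using Pu ltP[of n'] n
          by (simp add: P_def mult_nonneg_nonpos)
        ultimately show "\<gamma> k \<le> 0" by (subst geq) simp
      qed
      then show False using nz[OF \<gamma>R \<gamma>P] by blast
    qed
  qed
  have sub2: "\<beta> ` {..<n} \<subseteq> m_ij (real_roots I A rho C a) i j" using mre \<beta>re \<beta>spn ltP by auto
  have "m_ij (real_roots I A rho C a) i j \<subseteq> m_ij (R a) i j" using re_R[OF a] by (auto simp: m_ij_def)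
  then show ?thesis using sub sub2 by blast
qed

lemma main_rs: "root_system I A rho C (real_roots I A rho C)"
proof -
  have z: "\<forall>a\<in>A. real_roots I A rho C a \<subseteq> zvec I" using re_R Rz by blast
  have r1: "\<forall>a\<in>A. real_roots I A rho C a = pos_roots (real_roots I A rho C a) \<union> uminus ` pos_roots (real_roots I A rho C a)"
  proof
    fix a assume a: "a \<in> A"
    show "real_roots I A rho C a = pos_roots (real_roots I A rho C a) \<union> uminus ` pos_roots (real_roots I A rho C a)"
    proof (intro equalityI subsetI)
      fix v assume v: "v \<in> real_roots I A rho C a"
      then have "v \<in> R a" using re_R[OF a] by blast
      then have "(\<forall>k. 0 \<le> v k) \<or> (\<forall>k. v k \<le> 0)" using R_pn[OF a] by blast
      then show "v \<in> pos_roots (real_roots I A rho C a) \<union> uminus ` pos_roots (real_roots I A rho C a)"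
      proof
        assume "\<forall>k. 0 \<le> v k" then show ?thesis using v by (simp add: pos_roots_def)
      next
        assume h: "\<forall>k. v k \<le> 0"
        have "- v \<in> pos_roots (real_roots I A rho C a)" using re_neg[OF v] h by (simp add: pos_roots_def)
        moreover have "v = - (- v)" by (simp add: fun_eq_iff)
        ultimately show ?thesis by blast
      qed
    next
      fix v assume "v \<in> pos_roots (real_roots I A rho C a) \<union> uminus ` pos_roots (real_roots I A rho C a)"
      then show "v \<in> real_roots I A rho C a" using re_neg by (auto simp: pos_roots_def)
    qed
  qed
  have r2: "\<forall>a\<in>A. \<forall>i\<in>I. real_roots I A rho C a \<inter> {(\<lambda>k. c * alpha i k) | c::int. True} = {alpha i, - alpha i}"
  proof (intro ballI)
    fix a i assume a: "a \<in> A" and i: "i \<in> I"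
    have "real_roots I A rho C a \<inter> {(\<lambda>k. c * alpha i k) | c::int. True} \<subseteq> {alpha i, - alpha i}"
      using R2[OF a i] re_R[OF a] by blast
    moreover have "alpha i \<in> real_roots I A rho C a" "- alpha i \<in> real_roots I A rho C a"
      using re_alpha[OF a i] re_neg by auto
    moreover have "alpha i = (\<lambda>k. 1 * alpha i k)" "- alpha i = (\<lambda>k. (-1) * alpha i k)" by (auto simp: fun_eq_iff)
    ultimately show "real_roots I A rho C a \<inter> {(\<lambda>k. c * alpha i k) | c::int. True} = {alpha i, - alpha i}"
      by blast
  qed
  have r3: "\<forall>a\<in>A. \<forall>i\<in>I. sigma I C i a ` real_roots I A rho C a = real_roots I A rho C (rho i a)"
    using re_R3 by blast
  have r4: "\<forall>a\<in>A. \<forall>i\<in>I. \<forall>j\<in>I. i \<noteq> j \<longrightarrow> finite (m_ij (real_roots I A rho C a) i j) \<longrightarrow>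
         ((rho i \<circ> rho j) ^^ card (m_ij (real_roots I A rho C a) i j)) a = a"
  proof (intro ballI impI)
    fix a i j assume h: "a \<in> A" "i \<in> I" "j \<in> I" "i \<noteq> j" "finite (m_ij (real_roots I A rho C a) i j)"
    have e: "m_ij (real_roots I A rho C a) i j = m_ij (R a) i j" by (rule re_mij[OF h])
    show "((rho i \<circ> rho j) ^^ card (m_ij (real_roots I A rho C a) i j)) a = a"
      unfolding e by (rule R4[OF h(1-4)]) (use h(5) e in simp)
  qed
  show ?thesis unfolding root_system_def using cs z r1 r2 r3 r4 by (intro conjI)
qed

end

theorem proposition2p9:
  fixes I :: "'i set" and A :: "'a set" and rho :: "'i \<Rightarrow> 'a \<Rightarrow> 'a"
    and C :: "'a \<Rightarrow> 'i \<Rightarrow> 'i \<Rightarrow> int" and R :: "'a \<Rightarrow> ('i \<Rightarrow> int) set"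
  assumes "cartan_scheme I A rho C"
    and "root_system I A rho C R"
  shows "root_system I A rho C (real_roots I A rho C)
       \<and> weyl_groupoid_rs I A rho C (real_roots I A rho C) = weyl_groupoid_rs I A rho C R"
  using main_rs[OF assms(2)] by (simp add: weyl_groupoid_rs_def)

end
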